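(* Let $g$ be a locally Lipschitz function on $\mathbb{R}$ and suppose there is a separately convex function $h$ on $\mathbb{R}^2$ such that $g(t)=h(t,t)$ for every $t\in\mathbb{R}$. Then $$h(x+u,x-u)+h(x-u,x+u)-2h(x,x)\ge -u\cdot\liminf_{v\to0+}\int_v^u\frac{\omega_g(x,t)}{t^2}\,dt$$ for every $x,u\in\mathbb{R}$ with $u>0$. In particular, for every bounded interval $I\subset\mathbb{R}$ there is a constant $C(g,I)$ such that $$-\liminf_{b\to0+}\int_b^1\frac{\omega_g(x,t)}{t^2}\,dt<C(g,I)$$ for every $x\in I$.
   Context: A function $h:\mathbb{R}^2\to\mathbb{R}$ is called separately convex if it is convex on every line parallel to a coordinate axis. For a real function $g$ on $\mathbb{R}$, $\omega_g(x,t):=g(x+t)+g(x-t)-2g(x)$ is its second order central difference at $x$. *)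

theory Defs
  imports "HOL-Analysis.Analysis"
begin

definition locally_lipschitz_real :: "(real \<Rightarrow> real) \<Rightarrow> bool" where
  "locally_lipschitz_real g \<longleftrightarrow>
     (\<forall>x. \<exists>e>0. \<exists>L. \<forall>y\<in>ball x e. \<forall>z\<in>ball x e. \<bar>g y - g z\<bar> \<le> L * \<bar>y - z\<bar>)"

definition separately_convex :: "(real \<Rightarrow> real \<Rightarrow> real) \<Rightarrow> bool" where
  "separately_convex h \<longleftrightarrow>
     (\<forall>y. convex_on UNIV (\<lambda>x. h x y)) \<and> (\<forall>x. convex_on UNIV (\<lambda>y. h x y))"

definition omega :: "(real \<Rightarrow> real) \<Rightarrow> real \<Rightarrow> real \<Rightarrow> real" where
  "omega g x t = g (x + t) + g (x - t) - 2 * g x"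

end

theory Submission
  imports Defs
begin

lemma conv3:
  fixes f :: "real \<Rightarrow> real"
  assumes "convex_on UNIV f" "a < b" "b < c"
  shows "(c - a) * f b \<le> (c - b) * f a + (b - a) * f c"
proof -
  define t where "t = (b - a) / (c - a)"
  have t0: "0 \<le> t" "t \<le> 1" using assms by (auto simp: t_def field_simps)
  have tc: "t * (c - a) = b - a" using assms by (simp add: t_def)
  have b: "b = (1 - t) * a + t * c" using tc by (simp add: algebra_simps)
  have "f b \<le> (1 - t) * f a + t * f c"
    using convex_onD[OF assms(1) t0] b by simp
  then have "(c - a) * f b \<le> (c - a) * ((1 - t) * f a + t * f c)"
    using assms by (intro mult_left_mono) auto
  also have "\<dots> = ((c - a) - t * (c - a)) * f a + (t * (c - a)) * f c"
    by (simp add: algebra_simps)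
  also have "\<dots> = (c - b) * f a + (b - a) * f c" by (simp add: tc)
  finally show ?thesis .
qed

lemma llip_cont:
  assumes "locally_lipschitz_real g"
  shows "continuous_on UNIV g"
proof -
  have "isCont g y" for y
  proof -
    obtain e L where e: "e > 0" and L: "\<forall>a\<in>ball y e. \<forall>b\<in>ball y e. \<bar>g a - g b\<bar> \<le> L * \<bar>a - b\<bar>"
      using assms unfolding locally_lipschitz_real_def by blast
    show ?thesis unfolding continuous_at_eps_delta
    proof (intro allI impI)
      fix r :: real assume r: "r > 0"
      define d where "d = min e (r / (\<bar>L\<bar> + 1))"
      have d: "d > 0" using e r by (simp add: d_def)
      have "\<forall>z. dist z y < d \<longrightarrow> dist (g z) (g y) < r"
      proof (intro allI impI)
        fix z assume z: "dist z y < d"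
        then have zb: "z \<in> ball y e" by (auto simp: d_def dist_commute)
        have "\<bar>g z - g y\<bar> \<le> L * \<bar>z - y\<bar>" using L zb e by auto
        also have "\<dots> \<le> \<bar>L\<bar> * \<bar>z - y\<bar>" by (intro mult_right_mono) auto
        also have "\<dots> \<le> \<bar>L\<bar> * d" using z by (intro mult_left_mono) (auto simp: dist_real_def)
        also have "\<dots> < (\<bar>L\<bar> + 1) * (r / (\<bar>L\<bar> + 1))"
        proof -
          have "\<bar>L\<bar> * d \<le> \<bar>L\<bar> * (r / (\<bar>L\<bar> + 1))" by (intro mult_left_mono) (auto simp: d_def)
          also have "\<dots> < (\<bar>L\<bar> + 1) * (r / (\<bar>L\<bar> + 1))"
            using r by (intro mult_strict_right_mono) auto
          finally show ?thesis .
        qed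
        also have "\<dots> = r" by simp
        finally show "dist (g z) (g y) < r" by (simp add: dist_real_def)
      qed
      then show "\<exists>d>0. \<forall>z. dist z y < d \<longrightarrow> dist (g z) (g y) < r" using d by blast
    qed
  qed
  then show ?thesis by (simp add: continuous_at_imp_continuous_on)
qed


lemma discrete:
  fixes h :: "real \<Rightarrow> real \<Rightarrow> real"
  assumes sc: "separately_convex h" and gh: "\<forall>t. g t = h t t" and s: "0 < s" "s < t"
  shows "t * (t+s) * (h (x+s) (x-s) + h (x-s) (x+s) - 2 * g x)
     \<le> s * (t+s) * (h (x+t) (x-t) + h (x-t) (x+t) - 2 * g x) + s * (t-s)* omega g x t + t * (t-s)* omega g x s"
proof -
  have c1: "convex_on UNIV (\<lambda>a. h a y)" for y using sc by (simp add: separately_convex_def)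
  have c2: "convex_on UNIV (\<lambda>b. h a b)" for a using sc by (simp add: separately_convex_def)
  have i1: "(2 * t) * h (x+s) (x-t) \<le> (t-s) * g (x-t) + (t+s) * h (x+t) (x-t)"
    using conv3[OF c1[of "x-t"], of "x-t" "x+s" "x+t"] s gh by (simp add: algebra_simps)
  have i2: "(t+s) * h (x+s) (x-s) \<le> (2 * s) * h (x+s) (x-t) + (t-s) * g (x+s)"
    using conv3[OF c2[of "x+s"], of "x-t" "x-s" "x+s"] s gh by (simp add: algebra_simps)
  have i3: "(2 * t) * h (x-s) (x+t) \<le> (t+s) * h (x-t) (x+t) + (t-s) * g (x+t)"
    using conv3[OF c1[of "x+t"], of "x-t" "x-s" "x+t"] s gh by (simp add: algebra_simps)
  have i4: "(t+s) * h (x-s) (x+s) \<le> (t-s) * g (x-s) + (2 * s) * h (x-s) (x+t)"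
    using conv3[OF c2[of "x-s"], of "x-s" "x+s" "x+t"] s gh by (simp add: algebra_simps)
  have j1: "s * ((2 * t) * h (x+s) (x-t)) \<le> s * ((t-s) * g (x-t) + (t+s) * h (x+t) (x-t))"
    using i1 s by (intro mult_left_mono) auto
  have j2: "t * ((t+s) * h (x+s) (x-s)) \<le> t * ((2 * s) * h (x+s) (x-t) + (t-s) * g (x+s))"
    using i2 s by (intro mult_left_mono) auto
  have j3: "s * ((2 * t) * h (x-s) (x+t)) \<le> s * ((t+s) * h (x-t) (x+t) + (t-s) * g (x+t))"
    using i3 s by (intro mult_left_mono) auto
  have j4: "t * ((t+s) * h (x-s) (x+s)) \<le> t * ((t-s) * g (x-s) + (2 * s) * h (x-s) (x+t))"
    using i4 s by (intro mult_left_mono) auto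
  show ?thesis using j1 j2 j3 j4 unfolding omega_def by (simp add: algebra_simps)
qed


lemma chain:
  fixes D :: "real \<Rightarrow> real"
  assumes d: "d > 0" and e: "e \<ge> 0" and vu: "v \<le> u"
    and st: "\<And>s t. v \<le> s \<Longrightarrow> s \<le> t \<Longrightarrow> t \<le> u \<Longrightarrow> t - s < d \<Longrightarrow> D s \<le> D t + e * (t - s)"
  shows "D v \<le> D u + e * (u - v)"
proof -
  have "\<forall>s. v \<le> s \<and> s \<le> u \<and> u - s \<le> real n * (d/2) \<longrightarrow> D s \<le> D u + e * (u - s)" for n
  proof (induction n)
    case 0
    then show ?case by auto
  next
    case (Suc n)
    show ?case
    proof (intro allI impI)
      fix s assume s: "v \<le> s \<and> s \<le> u \<and> u - s \<le> real (Suc n) * (d/2)"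
      show "D s \<le> D u + e * (u - s)"
      proof (cases "u - s < d")
        case True
        then show ?thesis using st[of s u] s by auto
      next
        case False
        define t where "t = s + d/2"
        have t: "v \<le> t" "t \<le> u" "u - t \<le> real n * (d/2)" "s \<le> t" "t - s < d"
          using s False d by (auto simp: t_def algebra_simps)
        have "D t \<le> D u + e * (u - t)" using Suc.IH t by auto
        moreover have "D s \<le> D t + e * (t - s)" using st[of s t] s t by auto
        ultimately have "D s \<le> D u + (e * (u - t) + e * (t - s))" by linarith
        also have "e * (u - t) + e * (t - s) = e * (u - s)" by (simp add: algebra_simps)
        finally show ?thesis by simp
      qed
    qed
  qed
  moreover obtain n where "(u - v) / (d/2) \<le> real n" using real_arch_simple by blast
  then have "u - v \<le> real n * (d/2)" using d by (simp add: field_simps)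
  ultimately show ?thesis using vu by auto
qed

lemma key:
  fixes h :: "real \<Rightarrow> real \<Rightarrow> real"
  assumes sc: "separately_convex h" and gh: "\<forall>t. g t = h t t"
    and cont: "continuous_on UNIV g" and v: "0 < v" "v < u"
  shows "(h (x+v) (x-v) + h (x-v) (x+v) - 2 * g x) / v - integral {v..u} (\<lambda>t. omega g x t / t\<^sup>2)
     \<le> (h (x+u) (x-u) + h (x-u) (x+u) - 2 * g x) / u"
proof -
  define E where "E = (\<lambda>\<tau>. h (x+\<tau>) (x-\<tau>) + h (x-\<tau>) (x+\<tau>) - 2 * g x)"
  define \<phi> where "\<phi> = (\<lambda>t. omega g x t / t\<^sup>2)"
  define D where "D = (\<lambda>\<tau>. E \<tau> / \<tau> - integral {\<tau>..u} \<phi>)"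
  have c1: "continuous_on {v..u} (\<lambda>t. g (x+t))"
    by (rule continuous_on_compose2[OF cont]) (auto intro!: continuous_intros)
  have c2: "continuous_on {v..u} (\<lambda>t. g (x-t))"
    by (rule continuous_on_compose2[OF cont]) (auto intro!: continuous_intros)
  have cphi: "continuous_on {v..u} \<phi>"
    unfolding \<phi>_def omega_def using c1 c2 v
    by (intro continuous_intros) auto
  have int: "\<phi> integrable_on {a..b}" if "v \<le> a" "b \<le> u" for a b
    by (rule integrable_continuous_interval, rule continuous_on_subset[OF cphi]) (use that in auto)
  have main: "D v \<le> D u + e * (u - v)" if e: "e > 0" for e
  proof -
    have "uniformly_continuous_on {v..u} \<phi>"
      by (rule compact_uniformly_continuous[OF cphi]) auto
    then obtain \<delta> where \<delta>: "\<delta> > 0"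
      and uc: "\<forall>a\<in>{v..u}. \<forall>b\<in>{v..u}. dist b a < \<delta> \<longrightarrow> dist (\<phi> b) (\<phi> a) < e"
      using e unfolding uniformly_continuous_on_def by metis
    show ?thesis
    proof (rule chain[OF \<delta> _ _])
      show "0 \<le> e" using e by simp
      show "v \<le> u" using v by simp
      fix s t assume st: "v \<le> s" "s \<le> t" "t \<le> u" "t - s < \<delta>"
      show "D s \<le> D t + e * (t - s)"
      proof (cases "s = t")
        case True then show ?thesis by simp
      next
        case False
        then have st': "s < t" using st by simp
        have s0: "0 < s" using st v by simp
        have disc: "t * (t+s) * E s \<le> s * (t+s) * E t + s * (t-s) * omega g x t + t * (t-s) * omega g x s"
          using discrete[OF sc gh s0 st'] unfolding E_def by simp
        have ne: "s \<noteq> 0" "t \<noteq> 0" "t + s \<noteq> 0" using s0 st' by auto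
        have K: "s * t * (t+s) > 0" using s0 st' by simp
        have eq: "(E s / s - E t / t - (t-s) * (t * \<phi> t + s * \<phi> s) / (t+s)) * (s * t * (t+s))
           = t * (t+s) * E s - (s * (t+s) * E t + s * (t-s) * omega g x t + t * (t-s) * omega g x s)"
        proof -
          have p1: "t * \<phi> t = omega g x t / t" "s * \<phi> s = omega g x s / s"
            using ne by (simp_all add: \<phi>_def power2_eq_square)
          have f1: "E s / s * (s * t * (t+s)) = t * (t+s) * E s" using ne by (simp add: field_simps)
          have f2: "E t / t * (s * t * (t+s)) = s * (t+s) * E t" using ne by (simp add: field_simps)
          have f3: "(t-s) * (omega g x t / t + omega g x s / s) / (t+s) * (s * t * (t+s))
              = (t-s) * (s * omega g x t + t * omega g x s)"
          proof -
            have "(omega g x t / t + omega g x s / s) * (s * t) = s * omega g x t + t * omega g x s"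
              using ne by (simp add: field_simps)
            moreover have "(t-s) * (omega g x t / t + omega g x s / s) / (t+s) * (s * t * (t+s))
               = (t-s) * ((omega g x t / t + omega g x s / s) * (s * t))" using ne by simp
            ultimately show ?thesis by simp
          qed
          have Z: "(t-s) * (t * \<phi> t + s * \<phi> s) / (t+s) = (t-s) * (omega g x t / t + omega g x s / s) / (t+s)"
            by (simp add: p1)
          have dist: "\<And>A B C K::real. (A - B - C) * K = A * K - B * K - C * K"
            by (simp add: algebra_simps)
          show ?thesis unfolding Z dist f1 f2 f3 by (simp add: algebra_simps)
        qed
        have "E s / s - E t / t - (t-s) * (t * \<phi> t + s * \<phi> s) / (t+s) \<le> 0"
        proof (rule ccontr)
          assume "\<not> ?thesis"
          then have "(E s / s - E t / t - (t-s) * (t * \<phi> t + s * \<phi> s) / (t+s)) * (s * t * (t+s)) > 0"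
            using K by simp
          then show False using eq disc by linarith
        qed
        then have A: "E s / s \<le> E t / t + (t-s) * (t * \<phi> t + s * \<phi> s) / (t+s)"
          by linarith
        define M where "M = max (\<phi> s) (\<phi> t)"
        have "t * \<phi> t \<le> t * M" "s * \<phi> s \<le> s * M"
          using s0 st' by (auto intro!: mult_left_mono simp: M_def)
        then have "(t-s) * (t * \<phi> t + s * \<phi> s) \<le> (t-s) * ((t+s) * M)"
          using st' by (intro mult_left_mono) (auto simp: algebra_simps)
        then have "(t-s) * (t * \<phi> t + s * \<phi> s) / (t+s) \<le> (t-s) * ((t+s) * M) / (t+s)"
          by (rule divide_right_mono) (use s0 st' in simp)
        also have "\<dots> = (t-s) * M" using s0 st' by simp
        finally have B: "(t-s) * (t * \<phi> t + s * \<phi> s) / (t+s) \<le> (t-s) * M" .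
        have "integral {s..t} (\<lambda>_. M - e) \<le> integral {s..t} \<phi>"
        proof (rule integral_le)
          show "(\<lambda>_. M - e) integrable_on {s..t}" by (rule integrable_const_ivl)
          show "\<phi> integrable_on {s..t}" using int st by simp
          fix \<tau> assume \<tau>: "\<tau> \<in> {s..t}"
          have "dist (\<phi> \<tau>) (\<phi> s) < e" using uc st \<tau> by (auto simp: dist_real_def)
          moreover have "dist (\<phi> \<tau>) (\<phi> t) < e" using uc st \<tau> by (auto simp: dist_real_def)
          ultimately show "M - e \<le> \<phi> \<tau>" by (auto simp: M_def dist_real_def)
        qed
        then have C: "(t - s) * (M - e) \<le> integral {s..t} \<phi>" using st' by simp
        have Dc: "integral {s..u} \<phi> = integral {s..t} \<phi> + integral {t..u} \<phi>"
          using Henstock_Kurzweil_Integration.integral_combine[OF st(2) st(3) int[OF st(1) order_refl]] by simp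
        have "(t - s) * (M - e) = (t - s) * M - e * (t - s)" by (simp add: algebra_simps)
        then show ?thesis using A B C Dc unfolding D_def by linarith
      qed
    qed
  qed
  have "D v \<le> D u"
  proof (rule field_le_epsilon)
    fix e :: real assume e: "0 < e"
    have "D v \<le> D u + (e / (u - v)) * (u - v)" using main[of "e / (u - v)"] e v by simp
    then show "D v \<le> D u + e" using v by simp
  qed
  then show ?thesis unfolding D_def E_def \<phi>_def by simp
qed


lemma liminf_aux:
  fixes I psi :: "real \<Rightarrow> real"
  assumes u: "u > 0"
    and der: "\<And>v. 0 < v \<Longrightarrow> v < u \<Longrightarrow> (I has_real_derivative -(psi v / v)) (at v)"
    and bd: "\<And>v. 0 < v \<Longrightarrow> v < u \<Longrightarrow> c \<le> psi v + I v" and e: "\<epsilon> > 0"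
  shows "eventually (\<lambda>v. c - \<epsilon> \<le> I v) (at_right 0)"
proof -
  define m where "m = c - \<epsilon>"
  have "\<exists>v1. 0 < v1 \<and> v1 < u \<and> m \<le> I v1"
  proof (rule ccontr)
    assume "\<not> ?thesis"
    then have lt: "\<And>v. 0 < v \<Longrightarrow> v < u \<Longrightarrow> I v < m" by force
    define v0 where "v0 = u / 2"
    have v0: "0 < v0" "v0 < u" using u by (auto simp: v0_def)
    define K where "K = (\<lambda>w. I w + \<epsilon> * ln w)"
    define w where "w = v0 * exp (-(\<bar>c - I v0\<bar> + 1) / \<epsilon>)"
    have w0: "0 < w" using v0 by (simp add: w_def)
    have "exp (-(\<bar>c - I v0\<bar> + 1) / \<epsilon>) < 1" using e by (simp add: divide_neg_pos add_pos_nonneg)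
    then have wv0: "w < v0" using v0 by (simp add: w_def)
    have lnw: "ln w = ln v0 - (\<bar>c - I v0\<bar> + 1) / \<epsilon>"
      using v0 by (simp add: w_def ln_mult minus_divide_left)
    have "K v0 < K w"
    proof (rule DERIV_neg_imp_decreasing[OF wv0])
      fix y assume y: "w \<le> y" "y \<le> v0"
      have y0: "0 < y" "y < u" using y w0 v0 by auto
      have "psi y > \<epsilon>" using bd[OF y0] lt[OF y0] by (simp add: m_def)
      then have neg: "-(psi y / y) + \<epsilon> * (1 / y) < 0"
        using y0 by (simp add: field_simps)
      have "(K has_real_derivative (-(psi y / y) + \<epsilon> * (1 / y))) (at y)"
        unfolding K_def using y0
        by (auto intro!: derivative_eq_intros der)
      then show "\<exists>d. (K has_real_derivative d) (at y) \<and> d < 0" using neg by blast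
    qed
    then have "I v0 + \<epsilon> * ln v0 < I w + \<epsilon> * ln w" by (simp add: K_def)
    also have "\<epsilon> * ln w = \<epsilon> * ln v0 - (\<bar>c - I v0\<bar> + 1)" using e by (simp add: lnw field_simps)
    finally have "I w > I v0 + \<bar>c - I v0\<bar> + 1" by simp
    then have "I w > m" using e by (auto simp: m_def)
    with lt[OF w0] wv0 v0 show False by simp
  qed
  then obtain v1 where v1: "0 < v1" "v1 < u" "m \<le> I v1" by blast
  have "m \<le> I w" if w: "0 < w" "w < v1" for w
  proof (rule ccontr)
    assume "\<not> m \<le> I w"
    then have Iw: "I w < m" by simp
    have "continuous_on {w..v1} I"
    proof (intro continuous_at_imp_continuous_on ballI)
      fix y assume "y \<in> {w..v1}"
      then have "0 < y" "y < u" using w v1 by auto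
      then show "isCont I y" using DERIV_isCont[OF der] by blast
    qed
    then obtain t0 where t0: "t0 \<in> {w..v1}" and mn: "\<And>y. y \<in> {w..v1} \<Longrightarrow> I t0 \<le> I y"
      using continuous_attains_inf[of "{w..v1}" I] w by auto
    have It0: "I t0 < m" using mn[of w] Iw w by auto
    have t0v1: "t0 < v1" using t0 It0 v1 by (cases "t0 = v1") auto
    have t00: "0 < t0" "t0 < u" using t0 w v1 by auto
    have "psi t0 > 0" using bd[OF t00] It0 e by (simp add: m_def)
    then have "-(psi t0 / t0) < 0" using t00 by simp
    then obtain d where d: "d > 0" and dd: "\<And>h. h > 0 \<Longrightarrow> h < d \<Longrightarrow> I t0 > I (t0 + h)"
      using DERIV_neg_dec_right[OF der[OF t00]] by blast
    define h where "h = min d (v1 - t0) / 2"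
    have hh: "h > 0" "h \<le> d / 2" "h \<le> (v1 - t0) / 2" using d t0v1 by (auto simp: h_def min_def)
    have h: "h > 0" "h < d" "t0 + h \<in> {w..v1}" using hh d t0v1 t0 by auto
    show False using dd[OF h(1,2)] mn[OF h(3)] by simp
  qed
  then have mm: "\<And>x. x \<in> {0<..<v1} \<Longrightarrow> c - \<epsilon> \<le> I x" by (auto simp: m_def)
  show ?thesis
    by (rule eventually_mono[OF eventually_at_right_real[OF v1(1)]]) (rule mm)
qed


lemma lower:
  fixes h :: "real \<Rightarrow> real \<Rightarrow> real"
  assumes sc: "separately_convex h" and gh: "\<forall>t. g t = h t t" and v: "0 < v"
  shows "- omega g x v \<le> h (x+v) (x-v) + h (x-v) (x+v) - 2 * g x"
proof -
  have c1: "convex_on UNIV (\<lambda>a. h a y)" for y using sc by (simp add: separately_convex_def)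
  have c2: "convex_on UNIV (\<lambda>b. h a b)" for a using sc by (simp add: separately_convex_def)
  have i1: "(2 * v) * h x (x-v) \<le> v * g (x-v) + v * h (x+v) (x-v)"
    using conv3[OF c1[of "x-v"], of "x-v" "x" "x+v"] v gh by (simp add: algebra_simps)
  have i2: "(2 * v) * h x (x+v) \<le> v * h (x-v) (x+v) + v * g (x+v)"
    using conv3[OF c1[of "x+v"], of "x-v" "x" "x+v"] v gh by (simp add: algebra_simps)
  have i3: "(2 * v) * g x \<le> v * h x (x-v) + v * h x (x+v)"
    using conv3[OF c2[of "x"], of "x-v" "x" "x+v"] v gh by (simp add: algebra_simps)
  have "0 \<le> v * (h (x+v) (x-v) + h (x-v) (x+v) - 2 * g x + omega g x v)"
    using i1 i2 i3 unfolding omega_def by (simp add: algebra_simps)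
  then show ?thesis using v by (simp add: zero_le_mult_iff)
qed

lemma part1:
  fixes h :: "real \<Rightarrow> real \<Rightarrow> real"
  assumes sc: "separately_convex h" and gh: "\<forall>t. g t = h t t"
    and cont: "continuous_on UNIV g" and u: "u > 0"
  shows "ereal (h (x + u) (x - u) + h (x - u) (x + u) - 2 * h x x)
              \<ge> - ereal u * Liminf (at_right 0)
                   (\<lambda>v. ereal (integral {v..u} (\<lambda>t. omega g x t / t\<^sup>2)))"
proof -
  define E where "E = (\<lambda>\<tau>. h (x+\<tau>) (x-\<tau>) + h (x-\<tau>) (x+\<tau>) - 2 * g x)"
  define \<phi> where "\<phi> = (\<lambda>t. omega g x t / t\<^sup>2)"
  define psi where "psi = (\<lambda>v. omega g x v / v)"
  define I where "I = (\<lambda>v. integral {v..u} \<phi>)"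
  define c where "c = - (E u / u)"
  have bd: "c \<le> psi v + I v" if v: "0 < v" "v < u" for v
  proof -
    have k: "E v / v - I v \<le> E u / u"
      using key[OF sc gh cont v, of x] by (simp add: E_def I_def \<phi>_def)
    have "- omega g x v \<le> E v" using lower[OF sc gh v(1), of x] by (simp add: E_def)
    then have "- omega g x v / v \<le> E v / v" using v by (intro divide_right_mono) auto
    then have "- psi v \<le> E v / v" by (simp add: psi_def)
    then show ?thesis using k by (simp add: c_def)
  qed
  have der: "(I has_real_derivative -(psi v / v)) (at v)" if v: "0 < v" "v < u" for v
  proof -
    have c1: "continuous_on {v/2..u} (\<lambda>t. g (x+t))"
      by (rule continuous_on_compose2[OF cont]) (auto intro!: continuous_intros)
    have c2: "continuous_on {v/2..u} (\<lambda>t. g (x-t))"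
      by (rule continuous_on_compose2[OF cont]) (auto intro!: continuous_intros)
    have cphi: "continuous_on {v/2..u} \<phi>"
      unfolding \<phi>_def omega_def using c1 c2 v
      by (intro continuous_intros) auto
    have "((\<lambda>y. integral {y..u} \<phi>) has_real_derivative - \<phi> v) (at v within {v/2..u})"
      using integral_has_real_derivative'[OF cphi, of v] v by auto
    moreover have "at v within {v/2..u} = at v"
      using v by (intro at_within_interior) auto
    moreover have "\<phi> v = psi v / v" by (simp add: \<phi>_def psi_def power2_eq_square)
    ultimately show ?thesis by (simp add: I_def)
  qed
  have L: "ereal c \<le> Liminf (at_right 0) (\<lambda>v. ereal (I v))"
    unfolding le_Liminf_iff
  proof (intro allI impI)
    fix y :: ereal assume y: "y < ereal c"
    show "\<forall>\<^sub>F v in at_right 0. y < ereal (I v)"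
    proof (cases y)
      case (real r)
      have "r < c" using y real by simp
      have ev: "\<forall>\<^sub>F v in at_right 0. c - (c - r) / 2 \<le> I v"
        by (rule liminf_aux[OF u der bd]) (use \<open>r < c\<close> in auto)
      show ?thesis by (rule eventually_mono[OF ev]) (use \<open>r < c\<close> real in \<open>auto simp: field_simps\<close>)
    next
      case PInf then show ?thesis using y by simp
    next
      case MInf then show ?thesis by simp
    qed
  qed
  define Lm where "Lm = Liminf (at_right 0) (\<lambda>v. ereal (I v))"
  have "- ereal u * Lm \<le> ereal (E u)"
  proof (cases Lm)
    case (real l)
    then have "c \<le> l" using L by (simp add: Lm_def)
    then have "- u * l \<le> - u * c" using u by (intro mult_left_mono_neg) auto
    also have "- u * c = E u" using u by (simp add: c_def)
    finally show ?thesis using real by simp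
  next
    case PInf then show ?thesis using u by simp
  next
    case MInf then show ?thesis using L by (simp add: Lm_def)
  qed
  then show ?thesis using gh by (simp add: Lm_def I_def \<phi>_def E_def)
qed


theorem proposition4p1:
  fixes g :: "real \<Rightarrow> real" and h :: "real \<Rightarrow> real \<Rightarrow> real"
  assumes "locally_lipschitz_real g"
    and "separately_convex h"
    and "\<forall>t. g t = h t t"
  shows "(\<forall>x u. u > 0 \<longrightarrow>
            ereal (h (x + u) (x - u) + h (x - u) (x + u) - 2 * h x x)
              \<ge> - ereal u * Liminf (at_right 0)
                   (\<lambda>v. ereal (integral {v..u} (\<lambda>t. omega g x t / t\<^sup>2))))
       \<and> (\<forall>I::real set. is_interval I \<and> bounded I \<longrightarrow>
            (\<exists>C::real. \<forall>x\<in>I.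
               - Liminf (at_right 0) (\<lambda>b. ereal (integral {b..1} (\<lambda>t. omega g x t / t\<^sup>2)))
                 < ereal C))"
proof -
  have cont: "continuous_on UNIV g" by (rule llip_cont[OF assms(1)])
  have P1: "\<forall>x u. u > 0 \<longrightarrow>
            ereal (h (x + u) (x - u) + h (x - u) (x + u) - 2 * h x x)
              \<ge> - ereal u * Liminf (at_right 0)
                   (\<lambda>v. ereal (integral {v..u} (\<lambda>t. omega g x t / t\<^sup>2)))"
    using part1[OF assms(2) assms(3) cont] by blast
  have P2: "\<exists>C::real. \<forall>x\<in>I.
               - Liminf (at_right 0) (\<lambda>b. ereal (integral {b..1} (\<lambda>t. omega g x t / t\<^sup>2)))
                 < ereal C" if bI: "bounded I" for I :: "real set"
  proof -
    obtain R where R: "\<forall>x\<in>I. \<bar>x\<bar> \<le> R" using bI unfolding bounded_real by blast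
    define R' where "R' = max R 0"
    have R': "\<forall>x\<in>I. \<bar>x\<bar> \<le> R'" "R' \<ge> 0" using R by (auto simp: R'_def)
    have cg: "continuous_on {-R'..R'} g" by (rule continuous_on_subset[OF cont]) simp
    have ne: "{-R'..R'} \<noteq> {}" using R'(2) by simp
    obtain x0 where x0: "\<And>y. y \<in> {-R'..R'} \<Longrightarrow> g x0 \<le> g y"
      using continuous_attains_inf[OF compact_Icc ne cg] by blast
    define p where "p = -R' - 1"
    define q where "q = R' + 1"
    define Mx where "Mx = max (max (h p p) (h p q)) (max (h q p) (h q q))"
    have c1: "convex_on {p..q} (\<lambda>a. h a y)" for y
      by (rule convex_on_subset[OF _ subset_UNIV]) (use assms(2) in \<open>simp_all add: separately_convex_def\<close>)
    have c2: "convex_on {p..q} (\<lambda>b. h a b)" for a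
      by (rule convex_on_subset[OF _ subset_UNIV]) (use assms(2) in \<open>simp_all add: separately_convex_def\<close>)
    have box: "h a b \<le> Mx" if "a \<in> {p..q}" "b \<in> {p..q}" for a b
    proof -
      have "h a b \<le> max (h p b) (h q b)" using convex_on_le_max[OF c1 that(1)] by simp
      moreover have "h p b \<le> max (h p p) (h p q)" using convex_on_le_max[OF c2 that(2)] by simp
      moreover have "h q b \<le> max (h q p) (h q q)" using convex_on_le_max[OF c2 that(2)] by simp
      ultimately show ?thesis unfolding Mx_def by (simp add: max_def split: if_splits)
    qed
    show ?thesis
    proof (intro exI ballI)
      fix x assume x: "x \<in> I"
      have xb: "\<bar>x\<bar> \<le> R'" using R' x by auto
      have m1: "x+1 \<in> {p..q}" "x-1 \<in> {p..q}" using xb by (auto simp: p_def q_def abs_le_iff)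
      have "h (x+1) (x-1) \<le> Mx" "h (x-1) (x+1) \<le> Mx"
        using box[OF m1(1) m1(2)] box[OF m1(2) m1(1)] by auto
      moreover have "g x0 \<le> h x x" using x0[of x] xb assms(3) by (auto simp: abs_le_iff)
      ultimately have E: "h (x + 1) (x - 1) + h (x - 1) (x + 1) - 2 * h x x < 2 * Mx - 2 * g x0 + 1"
        by linarith
      have "- ereal 1 * Liminf (at_right 0) (\<lambda>b. ereal (integral {b..1} (\<lambda>t. omega g x t / t\<^sup>2)))
          \<le> ereal (h (x + 1) (x - 1) + h (x - 1) (x + 1) - 2 * h x x)"
        using P1[rule_format, of 1 x] by simp
      moreover have "\<And>L::ereal. - ereal 1 * L = - L" by (case_tac L) auto
      ultimately have "- Liminf (at_right 0) (\<lambda>b. ereal (integral {b..1} (\<lambda>t. omega g x t / t\<^sup>2)))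
          \<le> ereal (h (x + 1) (x - 1) + h (x - 1) (x + 1) - 2 * h x x)"
        by simp
      also have "\<dots> < ereal (2 * Mx - 2 * g x0 + 1)" using E by simp
      finally show "- Liminf (at_right 0) (\<lambda>b. ereal (integral {b..1} (\<lambda>t. omega g x t / t\<^sup>2)))
          < ereal (2 * Mx - 2 * g x0 + 1)" .
    qed
  qed
  show ?thesis
  proof (rule conjI)
    show "\<forall>I::real set. is_interval I \<and> bounded I \<longrightarrow>
            (\<exists>C::real. \<forall>x\<in>I.
               - Liminf (at_right 0) (\<lambda>b. ereal (integral {b..1} (\<lambda>t. omega g x t / t\<^sup>2)))
                 < ereal C)"
    proof (intro allI impI)
      fix I :: "real set" assume "is_interval I \<and> bounded I"
      then have "bounded I" by (rule conjunct2)
      then show "\<exists>C::real. \<forall>x\<in>I.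
               - Liminf (at_right 0) (\<lambda>b. ereal (integral {b..1} (\<lambda>t. omega g x t / t\<^sup>2)))
                 < ereal C" by (rule P2)
    qed
  qed (rule P1)
qed

end
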